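(* Along a $C^1$ curve $z(s)$ with tangent $v^\mu=dz^\mu/ds$ in a Lorentzian manifold, let $p^\mu(s)$, antisymmetric $S^{\mu\nu}(s)$, a timelike unit vector $u^\mu(s)$ ($u_\mu u^\mu=-1$) and a scalar $M(s)>0$ be differentiable and satisfy $p^\mu=Mu^\mu$, $u_\mu S^{\mu\nu}=0$, and $u^\kappa v_\kappa\neq0$. Define the force and torque by $$F^\nu=\frac{\delta p^\nu}{\delta s}-\tfrac12 S^{\kappa\lambda}v^\mu R_{\kappa\lambda\mu}{}^{\nu},\qquad L^{\kappa\lambda}=\frac{\delta S^{\kappa\lambda}}{\delta s}-2p^{[\kappa}v^{\lambda]}.$$ Then $$\frac{dM}{ds}=(u^\kappa v_\kappa)^{-1}\Big[F^\mu v_\mu+u_\nu\frac{\delta u_\mu}{\delta s}L^{\mu\nu}\Big].$$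
   Context: $\delta/\delta s=v^\mu\nabla_\mu$ is the covariant derivative along the curve; $R_{\kappa\lambda\mu\nu}$ is the Riemann tensor, antisymmetric in its last two indices (and in its first two); $A^{[\kappa}B^{\lambda]}=\tfrac12(A^\kappa B^\lambda-A^\lambda B^\kappa)$. *)

theory Defs
  imports "HOL-Analysis.Analysis"
begin

text \<open>Local coordinate description of a Lorentzian metric on an open set U of R^n
  (coordinates indexed by the finite type 'n).  A metric is a matrix-valued
  field g x (components g x $ i $ j = g_ij(x)).\<close>

definition lorentzian_matrix :: "real^'n^'n \<Rightarrow> bool" where
  "lorentzian_matrix G \<longleftrightarrow> transpose G = G \<and>
     (\<exists>(P::real^'n^'n) i0. invertible P \<and>
        transpose P ** G ** P = (\<chi> i j. if i = j then (if i = i0 then -1 else 1) else 0))"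

definition pd :: "(real^'n \<Rightarrow> real) \<Rightarrow> real^'n \<Rightarrow> 'n \<Rightarrow> real" where
  "pd f x k = frechet_derivative f (at x) (axis k 1)"

definition ginv :: "(real^'n \<Rightarrow> real^'n^'n) \<Rightarrow> real^'n \<Rightarrow> real^'n^'n" where
  "ginv g x = matrix_inv (g x)"

definition Gamma :: "(real^'n \<Rightarrow> real^'n^'n) \<Rightarrow> real^'n \<Rightarrow> 'n \<Rightarrow> 'n \<Rightarrow> 'n \<Rightarrow> real" where
  "Gamma g x a b c = (1/2) * (\<Sum>d\<in>UNIV. ginv g x $ a $ d *
      (pd (\<lambda>y. g y $ d $ c) x b + pd (\<lambda>y. g y $ d $ b) x c - pd (\<lambda>y. g y $ b $ c) x d))"

text \<open>Riemann tensor R^rho_{sigma mu nu} (MTW convention), its fully lowered form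
  R_{kappa lambda mu nu} = g_{kappa rho} R^rho_{lambda mu nu}, and R_{kappa lambda mu}^nu.\<close>
definition Riem_up :: "(real^'n \<Rightarrow> real^'n^'n) \<Rightarrow> real^'n \<Rightarrow> 'n \<Rightarrow> 'n \<Rightarrow> 'n \<Rightarrow> 'n \<Rightarrow> real" where
  "Riem_up g x \<rho> \<sigma> \<mu> \<nu> =
     pd (\<lambda>y. Gamma g y \<rho> \<nu> \<sigma>) x \<mu> - pd (\<lambda>y. Gamma g y \<rho> \<mu> \<sigma>) x \<nu>
     + (\<Sum>l\<in>UNIV. Gamma g x \<rho> \<mu> l * Gamma g x l \<nu> \<sigma> - Gamma g x \<rho> \<nu> l * Gamma g x l \<mu> \<sigma>)"

definition Riem_low :: "(real^'n \<Rightarrow> real^'n^'n) \<Rightarrow> real^'n \<Rightarrow> 'n \<Rightarrow> 'n \<Rightarrow> 'n \<Rightarrow> 'n \<Rightarrow> real" where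
  "Riem_low g x \<kappa> l \<mu> \<nu> = (\<Sum>\<rho>\<in>UNIV. g x $ \<kappa> $ \<rho> * Riem_up g x \<rho> l \<mu> \<nu>)"

definition Riem_mixed :: "(real^'n \<Rightarrow> real^'n^'n) \<Rightarrow> real^'n \<Rightarrow> 'n \<Rightarrow> 'n \<Rightarrow> 'n \<Rightarrow> 'n \<Rightarrow> real" where
  "Riem_mixed g x \<kappa> l \<mu> \<nu> = (\<Sum>\<sigma>\<in>UNIV. ginv g x $ \<nu> $ \<sigma> * Riem_low g x \<kappa> l \<mu> \<sigma>)"

definition lower :: "(real^'n \<Rightarrow> real^'n^'n) \<Rightarrow> real^'n \<Rightarrow> real^'n \<Rightarrow> 'n \<Rightarrow> real" where
  "lower g x X \<mu> = (\<Sum>\<alpha>\<in>UNIV. g x $ \<mu> $ \<alpha> * X $ \<alpha>)"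

definition cov_vec :: "(real^'n \<Rightarrow> real^'n^'n) \<Rightarrow> (real \<Rightarrow> real^'n) \<Rightarrow> (real \<Rightarrow> real^'n)
    \<Rightarrow> (real \<Rightarrow> real^'n) \<Rightarrow> real \<Rightarrow> 'n \<Rightarrow> real" where
  "cov_vec g z v X s \<nu> = vector_derivative X (at s) $ \<nu>
     + (\<Sum>\<alpha>\<in>UNIV. \<Sum>\<beta>\<in>UNIV. Gamma g (z s) \<nu> \<alpha> \<beta> * v s $ \<alpha> * X s $ \<beta>)"

definition cov_covec :: "(real^'n \<Rightarrow> real^'n^'n) \<Rightarrow> (real \<Rightarrow> real^'n) \<Rightarrow> (real \<Rightarrow> real^'n)
    \<Rightarrow> (real \<Rightarrow> 'n \<Rightarrow> real) \<Rightarrow> real \<Rightarrow> 'n \<Rightarrow> real" where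
  "cov_covec g z v \<omega> s \<mu> = deriv (\<lambda>t. \<omega> t \<mu>) s
     - (\<Sum>\<alpha>\<in>UNIV. \<Sum>\<beta>\<in>UNIV. Gamma g (z s) \<alpha> \<beta> \<mu> * v s $ \<beta> * \<omega> s \<alpha>)"

definition cov_ten2 :: "(real^'n \<Rightarrow> real^'n^'n) \<Rightarrow> (real \<Rightarrow> real^'n) \<Rightarrow> (real \<Rightarrow> real^'n)
    \<Rightarrow> (real \<Rightarrow> real^'n^'n) \<Rightarrow> real \<Rightarrow> 'n \<Rightarrow> 'n \<Rightarrow> real" where
  "cov_ten2 g z v S s \<kappa> l = vector_derivative S (at s) $ \<kappa> $ l
     + (\<Sum>\<alpha>\<in>UNIV. \<Sum>\<beta>\<in>UNIV. Gamma g (z s) \<kappa> \<alpha> \<beta> * v s $ \<alpha> * S s $ \<beta> $ l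
                           + Gamma g (z s) l \<alpha> \<beta> * v s $ \<alpha> * S s $ \<kappa> $ \<beta>)"

definition force :: "(real^'n \<Rightarrow> real^'n^'n) \<Rightarrow> (real \<Rightarrow> real^'n) \<Rightarrow> (real \<Rightarrow> real^'n)
    \<Rightarrow> (real \<Rightarrow> real^'n) \<Rightarrow> (real \<Rightarrow> real^'n^'n) \<Rightarrow> real \<Rightarrow> 'n \<Rightarrow> real" where
  "force g z v p S s \<nu> = cov_vec g z v p s \<nu>
     - (1/2) * (\<Sum>\<kappa>\<in>UNIV. \<Sum>l\<in>UNIV. \<Sum>\<mu>\<in>UNIV.
                  S s $ \<kappa> $ l * v s $ \<mu> * Riem_mixed g (z s) \<kappa> l \<mu> \<nu>)"

definition torque :: "(real^'n \<Rightarrow> real^'n^'n) \<Rightarrow> (real \<Rightarrow> real^'n) \<Rightarrow> (real \<Rightarrow> real^'n)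
    \<Rightarrow> (real \<Rightarrow> real^'n) \<Rightarrow> (real \<Rightarrow> real^'n^'n) \<Rightarrow> real \<Rightarrow> 'n \<Rightarrow> 'n \<Rightarrow> real" where
  "torque g z v p S s \<kappa> l = cov_ten2 g z v S s \<kappa> l
     - 2 * ((1/2) * (p s $ \<kappa> * v s $ l - p s $ l * v s $ \<kappa>))"

end

theory Submission
  imports Defs
begin

lemma sw12: "(\<Sum>a\<in>A. \<Sum>b\<in>B. \<Sum>c\<in>C. \<Sum>d\<in>D. f a b c d) = (\<Sum>b\<in>B. \<Sum>a\<in>A. \<Sum>c\<in>C. \<Sum>d\<in>D. f a b c d)"
  by (rule sum.swap)
lemma sw23: "(\<Sum>a\<in>A. \<Sum>b\<in>B. \<Sum>c\<in>C. \<Sum>d\<in>D. f a b c d) = (\<Sum>a\<in>A. \<Sum>c\<in>C. \<Sum>b\<in>B. \<Sum>d\<in>D. f a b c d)"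
  by (rule sum.cong[OF refl], rule sum.swap)
lemma sw34: "(\<Sum>a\<in>A. \<Sum>b\<in>B. \<Sum>c\<in>C. \<Sum>d\<in>D. f a b c d) = (\<Sum>a\<in>A. \<Sum>b\<in>B. \<Sum>d\<in>D. \<Sum>c\<in>C. f a b c d)"
  by (rule sum.cong[OF refl], rule sum.cong[OF refl], rule sum.swap)

lemma core:
  fixes G dg :: "'n::finite \<Rightarrow> 'n \<Rightarrow> real" and \<Gamma> :: "'n \<Rightarrow> 'n \<Rightarrow> 'n \<Rightarrow> real"
  assumes E: "\<And>\<mu> \<gamma>. dg \<mu> \<gamma> = (\<Sum>\<beta>\<in>UNIV. V \<beta> * (\<Sum>\<alpha>\<in>UNIV. G \<alpha> \<gamma> * \<Gamma> \<alpha> \<beta> \<mu> + G \<mu> \<alpha> * \<Gamma> \<alpha> \<beta> \<gamma>))"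
  shows "(\<Sum>\<mu>\<in>UNIV. \<Sum>\<alpha>\<in>UNIV. dg \<mu> \<alpha> * X \<alpha> * Y \<mu>) =
    (\<Sum>\<mu>\<in>UNIV. \<Sum>\<alpha>\<in>UNIV. G \<mu> \<alpha> * ((\<Sum>a\<in>UNIV. \<Sum>b\<in>UNIV. \<Gamma> \<alpha> a b * V a * X b) * Y \<mu>
        + X \<alpha> * (\<Sum>a\<in>UNIV. \<Sum>b\<in>UNIV. \<Gamma> \<mu> a b * V a * Y b)))"
proof -
  have L: "(\<Sum>\<mu>\<in>UNIV. \<Sum>\<alpha>\<in>UNIV. dg \<mu> \<alpha> * X \<alpha> * Y \<mu>) =
     (\<Sum>\<mu>\<in>UNIV. \<Sum>\<alpha>\<in>UNIV. \<Sum>\<beta>\<in>UNIV. \<Sum>\<gamma>\<in>UNIV. V \<beta> * G \<gamma> \<alpha> * \<Gamma> \<gamma> \<beta> \<mu> * X \<alpha> * Y \<mu>)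
   + (\<Sum>\<mu>\<in>UNIV. \<Sum>\<alpha>\<in>UNIV. \<Sum>\<beta>\<in>UNIV. \<Sum>\<gamma>\<in>UNIV. V \<beta> * G \<mu> \<gamma> * \<Gamma> \<gamma> \<beta> \<alpha> * X \<alpha> * Y \<mu>)"
    by (simp add: E sum_distrib_left sum_distrib_right sum.distrib algebra_simps)
  have R: "(\<Sum>\<mu>\<in>UNIV. \<Sum>\<alpha>\<in>UNIV. G \<mu> \<alpha> * ((\<Sum>a\<in>UNIV. \<Sum>b\<in>UNIV. \<Gamma> \<alpha> a b * V a * X b) * Y \<mu>
        + X \<alpha> * (\<Sum>a\<in>UNIV. \<Sum>b\<in>UNIV. \<Gamma> \<mu> a b * V a * Y b))) =
     (\<Sum>\<mu>\<in>UNIV. \<Sum>\<alpha>\<in>UNIV. \<Sum>a\<in>UNIV. \<Sum>b\<in>UNIV. G \<mu> \<alpha> * \<Gamma> \<alpha> a b * V a * X b * Y \<mu>)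
   + (\<Sum>\<mu>\<in>UNIV. \<Sum>\<alpha>\<in>UNIV. \<Sum>a\<in>UNIV. \<Sum>b\<in>UNIV. G \<mu> \<alpha> * X \<alpha> * \<Gamma> \<mu> a b * V a * Y b)"
    by (simp add: sum_distrib_left sum_distrib_right sum.distrib algebra_simps)
  have 1: "(\<Sum>\<mu>\<in>UNIV. \<Sum>\<alpha>\<in>UNIV. \<Sum>\<beta>\<in>UNIV. \<Sum>\<gamma>\<in>UNIV. V \<beta> * G \<gamma> \<alpha> * \<Gamma> \<gamma> \<beta> \<mu> * X \<alpha> * Y \<mu>)
     = (\<Sum>\<mu>\<in>UNIV. \<Sum>\<alpha>\<in>UNIV. \<Sum>a\<in>UNIV. \<Sum>b\<in>UNIV. G \<mu> \<alpha> * X \<alpha> * \<Gamma> \<mu> a b * V a * Y b)"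
    apply (rule trans[OF sw34], rule trans[OF sw23], rule trans[OF sw12], rule trans[OF sw23], rule trans[OF sw34])
    by (simp add: mult_ac)
  have 2: "(\<Sum>\<mu>\<in>UNIV. \<Sum>\<alpha>\<in>UNIV. \<Sum>\<beta>\<in>UNIV. \<Sum>\<gamma>\<in>UNIV. V \<beta> * G \<mu> \<gamma> * \<Gamma> \<gamma> \<beta> \<alpha> * X \<alpha> * Y \<mu>)
     = (\<Sum>\<mu>\<in>UNIV. \<Sum>\<alpha>\<in>UNIV. \<Sum>a\<in>UNIV. \<Sum>b\<in>UNIV. G \<mu> \<alpha> * \<Gamma> \<alpha> a b * V a * X b * Y \<mu>)"
    apply (rule trans[OF sw34], rule trans[OF sw23], rule trans[OF sw34])
    by (simp add: mult_ac)
  show ?thesis using L R 1 2 by simp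
qed

lemma s12: "(\<Sum>a\<in>A. \<Sum>b\<in>B. \<Sum>c\<in>C. f a b c) = (\<Sum>b\<in>B. \<Sum>a\<in>A. \<Sum>c\<in>C. f a b c)"
  by (rule sum.swap)
lemma s23: "(\<Sum>a\<in>A. \<Sum>b\<in>B. \<Sum>c\<in>C. f a b c) = (\<Sum>a\<in>A. \<Sum>c\<in>C. \<Sum>b\<in>B. f a b c)"
  by (rule sum.cong[OF refl], rule sum.swap)

lemma core1:
  fixes G dg :: "'n::finite \<Rightarrow> 'n \<Rightarrow> real" and \<Gamma> :: "'n \<Rightarrow> 'n \<Rightarrow> 'n \<Rightarrow> real"
  assumes E: "\<And>\<mu> \<gamma>. dg \<mu> \<gamma> = (\<Sum>\<beta>\<in>UNIV. V \<beta> * (\<Sum>\<alpha>\<in>UNIV. G \<alpha> \<gamma> * \<Gamma> \<alpha> \<beta> \<mu> + G \<mu> \<alpha> * \<Gamma> \<alpha> \<beta> \<gamma>))"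
  shows "(\<Sum>\<alpha>\<in>UNIV. dg \<mu> \<alpha> * X \<alpha>) =
    (\<Sum>\<beta>\<in>UNIV. \<Sum>\<gamma>\<in>UNIV. \<Gamma> \<gamma> \<beta> \<mu> * V \<beta> * (\<Sum>\<alpha>\<in>UNIV. G \<gamma> \<alpha> * X \<alpha>))
     + (\<Sum>\<alpha>\<in>UNIV. G \<mu> \<alpha> * (\<Sum>a\<in>UNIV. \<Sum>b\<in>UNIV. \<Gamma> \<alpha> a b * V a * X b))"
proof -
  have L: "(\<Sum>\<alpha>\<in>UNIV. dg \<mu> \<alpha> * X \<alpha>) =
     (\<Sum>\<alpha>\<in>UNIV. \<Sum>\<beta>\<in>UNIV. \<Sum>\<gamma>\<in>UNIV. V \<beta> * G \<gamma> \<alpha> * \<Gamma> \<gamma> \<beta> \<mu> * X \<alpha>)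
   + (\<Sum>\<alpha>\<in>UNIV. \<Sum>\<beta>\<in>UNIV. \<Sum>\<gamma>\<in>UNIV. V \<beta> * G \<mu> \<gamma> * \<Gamma> \<gamma> \<beta> \<alpha> * X \<alpha>)"
    by (simp add: E sum_distrib_left sum_distrib_right sum.distrib algebra_simps)
  have R: "(\<Sum>\<beta>\<in>UNIV. \<Sum>\<gamma>\<in>UNIV. \<Gamma> \<gamma> \<beta> \<mu> * V \<beta> * (\<Sum>\<alpha>\<in>UNIV. G \<gamma> \<alpha> * X \<alpha>))
     + (\<Sum>\<alpha>\<in>UNIV. G \<mu> \<alpha> * (\<Sum>a\<in>UNIV. \<Sum>b\<in>UNIV. \<Gamma> \<alpha> a b * V a * X b)) =
     (\<Sum>\<beta>\<in>UNIV. \<Sum>\<gamma>\<in>UNIV. \<Sum>\<alpha>\<in>UNIV. \<Gamma> \<gamma> \<beta> \<mu> * V \<beta> * G \<gamma> \<alpha> * X \<alpha>)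
     + (\<Sum>\<alpha>\<in>UNIV. \<Sum>a\<in>UNIV. \<Sum>b\<in>UNIV. G \<mu> \<alpha> * \<Gamma> \<alpha> a b * V a * X b)"
    by (simp add: sum_distrib_left sum_distrib_right algebra_simps)
  have 1: "(\<Sum>\<alpha>\<in>UNIV. \<Sum>\<beta>\<in>UNIV. \<Sum>\<gamma>\<in>UNIV. V \<beta> * G \<gamma> \<alpha> * \<Gamma> \<gamma> \<beta> \<mu> * X \<alpha>)
     = (\<Sum>\<beta>\<in>UNIV. \<Sum>\<gamma>\<in>UNIV. \<Sum>\<alpha>\<in>UNIV. \<Gamma> \<gamma> \<beta> \<mu> * V \<beta> * G \<gamma> \<alpha> * X \<alpha>)"
    apply (rule trans[OF s12], rule trans[OF s23])
    by (simp add: mult_ac)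
  have 2: "(\<Sum>\<alpha>\<in>UNIV. \<Sum>\<beta>\<in>UNIV. \<Sum>\<gamma>\<in>UNIV. V \<beta> * G \<mu> \<gamma> * \<Gamma> \<gamma> \<beta> \<alpha> * X \<alpha>)
     = (\<Sum>\<alpha>\<in>UNIV. \<Sum>a\<in>UNIV. \<Sum>b\<in>UNIV. G \<mu> \<alpha> * \<Gamma> \<alpha> a b * V a * X b)"
    apply (rule trans[OF s23], rule trans[OF s12], rule trans[OF s23])
    by (simp add: mult_ac)
  show ?thesis using L R 1 2 by simp
qed

lemma bil_sym:
  fixes G :: "'n::finite \<Rightarrow> 'n \<Rightarrow> real"
  assumes Gs: "\<And>a b. G a b = G b a"
  shows "(\<Sum>\<mu>\<in>UNIV. (\<Sum>\<alpha>\<in>UNIV. G \<mu> \<alpha> * X \<alpha>) * Y \<mu>) = (\<Sum>\<mu>\<in>UNIV. (\<Sum>\<alpha>\<in>UNIV. G \<mu> \<alpha> * Y \<alpha>) * X \<mu>)"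
proof -
  have "(\<Sum>\<mu>\<in>UNIV. (\<Sum>\<alpha>\<in>UNIV. G \<mu> \<alpha> * X \<alpha>) * Y \<mu>) = (\<Sum>\<mu>\<in>UNIV. \<Sum>\<alpha>\<in>UNIV. G \<mu> \<alpha> * X \<alpha> * Y \<mu>)"
    by (simp add: sum_distrib_right)
  also have "\<dots> = (\<Sum>\<alpha>\<in>UNIV. \<Sum>\<mu>\<in>UNIV. G \<mu> \<alpha> * X \<alpha> * Y \<mu>)" by (rule sum.swap)
  also have "\<dots> = (\<Sum>\<alpha>\<in>UNIV. \<Sum>\<mu>\<in>UNIV. G \<alpha> \<mu> * Y \<mu> * X \<alpha>)"
    by (rule sum.cong[OF refl], rule sum.cong[OF refl], subst Gs, simp)
  also have "\<dots> = (\<Sum>\<mu>\<in>UNIV. (\<Sum>\<alpha>\<in>UNIV. G \<mu> \<alpha> * Y \<alpha>) * X \<mu>)"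
    by (simp add: sum_distrib_right)
  finally show ?thesis .
qed

lemma quad_anti:
  fixes A :: "'n::finite \<Rightarrow> 'n \<Rightarrow> real"
  assumes Aa: "\<And>a b. A a b = - A b a"
  shows "(\<Sum>a\<in>UNIV. W a * (\<Sum>b\<in>UNIV. W b * A b a)) = 0"
proof -
  let ?Q = "(\<Sum>a\<in>UNIV. W a * (\<Sum>b\<in>UNIV. W b * A b a))"
  have "?Q = (\<Sum>a\<in>UNIV. \<Sum>b\<in>UNIV. W a * W b * A b a)" by (simp add: sum_distrib_left mult_ac)
  also have "\<dots> = (\<Sum>b\<in>UNIV. \<Sum>a\<in>UNIV. W a * W b * A b a)" by (rule sum.swap)
  also have "\<dots> = (\<Sum>b\<in>UNIV. \<Sum>a\<in>UNIV. - (W b * W a * A a b))"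
    by (rule sum.cong[OF refl], rule sum.cong[OF refl], subst Aa, simp)
  also have "\<dots> = - ?Q" by (simp add: sum_negf sum_distrib_left mult_ac)
  finally show ?thesis by simp
qed

lemma contr:
  fixes G H :: "'n::finite \<Rightarrow> 'n \<Rightarrow> real"
  assumes "\<And>c d. (\<Sum>\<alpha>\<in>UNIV. G c \<alpha> * H \<alpha> d) = (if c = d then 1 else 0)"
  shows "(\<Sum>\<alpha>\<in>UNIV. G c \<alpha> * (\<Sum>d\<in>UNIV. H \<alpha> d * A d)) = A c"
proof -
  have "(\<Sum>\<alpha>\<in>UNIV. G c \<alpha> * (\<Sum>d\<in>UNIV. H \<alpha> d * A d)) = (\<Sum>\<alpha>\<in>UNIV. \<Sum>d\<in>UNIV. G c \<alpha> * H \<alpha> d * A d)"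
    by (simp add: sum_distrib_left mult_ac)
  also have "\<dots> = (\<Sum>d\<in>UNIV. \<Sum>\<alpha>\<in>UNIV. G c \<alpha> * H \<alpha> d * A d)" by (rule sum.swap)
  also have "\<dots> = (\<Sum>d\<in>UNIV. (\<Sum>\<alpha>\<in>UNIV. G c \<alpha> * H \<alpha> d) * A d)" by (simp add: sum_distrib_right)
  also have "\<dots> = (\<Sum>d\<in>UNIV. (if c = d then A d else 0))"
    by (rule sum.cong[OF refl]) (simp add: assms)
  also have "\<dots> = A c" by simp
  finally show ?thesis .
qed

lemma final_alg:
  fixes G :: "'n::finite \<Rightarrow> 'n \<Rightarrow> real" and uu V Du Dul Dp curv :: "'n \<Rightarrow> real"
    and S DS :: "'n \<Rightarrow> 'n \<Rightarrow> real" and m m' :: real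
  assumes Gs: "\<And>a b. G a b = G b a"
    and unit: "(\<Sum>\<mu>\<in>UNIV. (\<Sum>\<alpha>\<in>UNIV. G \<mu> \<alpha> * uu \<alpha>) * uu \<mu>) = -1"
    and K1: "\<And>\<mu>. Dul \<mu> = (\<Sum>\<alpha>\<in>UNIV. G \<mu> \<alpha> * Du \<alpha>)"
    and K2: "(\<Sum>\<mu>\<in>UNIV. (\<Sum>\<alpha>\<in>UNIV. G \<mu> \<alpha> * uu \<alpha>) * Du \<mu>) = 0"
    and K3: "\<And>\<nu>. (\<Sum>\<mu>\<in>UNIV. Dul \<mu> * S \<mu> \<nu>) + (\<Sum>\<mu>\<in>UNIV. (\<Sum>\<alpha>\<in>UNIV. G \<mu> \<alpha> * uu \<alpha>) * DS \<mu> \<nu>) = 0"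
    and Sa: "\<And>a b. S a b = - S b a"
    and DSa: "\<And>a b. DS a b = - DS b a"
    and K5: "\<And>a. Dp a = m' * uu a + m * Du a"
    and K6: "(\<Sum>\<mu>\<in>UNIV. curv \<mu> * (\<Sum>\<alpha>\<in>UNIV. G \<mu> \<alpha> * V \<alpha>)) = 0"
    and uv: "(\<Sum>\<kappa>\<in>UNIV. uu \<kappa> * (\<Sum>\<alpha>\<in>UNIV. G \<kappa> \<alpha> * V \<alpha>)) \<noteq> 0"
  shows "m' = inverse (\<Sum>\<kappa>\<in>UNIV. uu \<kappa> * (\<Sum>\<alpha>\<in>UNIV. G \<kappa> \<alpha> * V \<alpha>)) *
      ((\<Sum>\<mu>\<in>UNIV. (Dp \<mu> - curv \<mu>) * (\<Sum>\<alpha>\<in>UNIV. G \<mu> \<alpha> * V \<alpha>))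
     + (\<Sum>\<mu>\<in>UNIV. \<Sum>\<nu>\<in>UNIV. (\<Sum>\<alpha>\<in>UNIV. G \<nu> \<alpha> * uu \<alpha>) * Dul \<mu>
          * (DS \<mu> \<nu> - 2 * (1/2 * (m * uu \<mu> * V \<nu> - m * uu \<nu> * V \<mu>)))))"
proof -
  define ul where "ul \<mu> = (\<Sum>\<alpha>\<in>UNIV. G \<mu> \<alpha> * uu \<alpha>)" for \<mu>
  define vl where "vl \<mu> = (\<Sum>\<alpha>\<in>UNIV. G \<mu> \<alpha> * V \<alpha>)" for \<mu>
  define c where "c = (\<Sum>\<kappa>\<in>UNIV. uu \<kappa> * vl \<kappa>)"
  have c0: "c \<noteq> 0" using uv by (simp add: c_def vl_def)
  have b: "(\<Sum>\<mu>\<in>UNIV. Du \<mu> * vl \<mu>) = (\<Sum>\<mu>\<in>UNIV. Dul \<mu> * V \<mu>)"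
    using bil_sym[of G V Du, OF Gs] by (simp add: vl_def K1 mult_ac)
  have a: "(\<Sum>\<mu>\<in>UNIV. (Dp \<mu> - curv \<mu>) * vl \<mu>) = m' * c + m * (\<Sum>\<mu>\<in>UNIV. Dul \<mu> * V \<mu>)"
  proof -
    have "(\<Sum>\<mu>\<in>UNIV. (Dp \<mu> - curv \<mu>) * vl \<mu>) = (\<Sum>\<mu>\<in>UNIV. Dp \<mu> * vl \<mu>) - (\<Sum>\<mu>\<in>UNIV. curv \<mu> * vl \<mu>)"
      by (simp add: left_diff_distrib sum_subtractf)
    also have "(\<Sum>\<mu>\<in>UNIV. curv \<mu> * vl \<mu>) = 0" using K6 by (simp add: vl_def)
    also have "(\<Sum>\<mu>\<in>UNIV. Dp \<mu> * vl \<mu>) = m' * c + m * (\<Sum>\<mu>\<in>UNIV. Du \<mu> * vl \<mu>)"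
      unfolding K5 c_def by (simp add: algebra_simps sum.distrib sum_distrib_left)
    finally show ?thesis using b by simp
  qed
  have cc: "(\<Sum>\<nu>\<in>UNIV. ul \<nu> * V \<nu>) = c"
    using bil_sym[of G uu V, OF Gs] by (simp add: ul_def c_def vl_def mult_ac)
  have d: "(\<Sum>\<mu>\<in>UNIV. Dul \<mu> * uu \<mu>) = 0"
    using bil_sym[of G Du uu, OF Gs] K2 by (simp add: K1)
  have uu1: "(\<Sum>\<nu>\<in>UNIV. ul \<nu> * uu \<nu>) = -1" using unit by (simp add: ul_def)
  have e1: "\<And>\<mu>. (\<Sum>\<nu>\<in>UNIV. ul \<nu> * DS \<mu> \<nu>) = (\<Sum>\<nu>\<in>UNIV. Dul \<nu> * S \<nu> \<mu>)"
  proof -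
    fix \<mu>
    have "(\<Sum>\<nu>\<in>UNIV. ul \<nu> * DS \<mu> \<nu>) = - (\<Sum>\<nu>\<in>UNIV. ul \<nu> * DS \<nu> \<mu>)"
      by (subst DSa, simp add: sum_negf)
    also have "\<dots> = (\<Sum>\<nu>\<in>UNIV. Dul \<nu> * S \<nu> \<mu>)" using K3[of \<mu>] by (simp add: ul_def)
    finally show "?thesis \<mu>" .
  qed
  have e: "(\<Sum>\<mu>\<in>UNIV. \<Sum>\<nu>\<in>UNIV. ul \<nu> * Dul \<mu> * DS \<mu> \<nu>) = 0"
  proof -
    have "(\<Sum>\<mu>\<in>UNIV. \<Sum>\<nu>\<in>UNIV. ul \<nu> * Dul \<mu> * DS \<mu> \<nu>) = (\<Sum>\<mu>\<in>UNIV. Dul \<mu> * (\<Sum>\<nu>\<in>UNIV. ul \<nu> * DS \<mu> \<nu>))"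
      by (simp add: sum_distrib_left mult_ac)
    also have "\<dots> = (\<Sum>\<mu>\<in>UNIV. Dul \<mu> * (\<Sum>\<nu>\<in>UNIV. Dul \<nu> * S \<nu> \<mu>))" by (simp add: e1)
    also have "\<dots> = 0" by (rule quad_anti[OF Sa])
    finally show ?thesis .
  qed
  have sec: "(\<Sum>\<mu>\<in>UNIV. \<Sum>\<nu>\<in>UNIV. ul \<nu> * Dul \<mu>
          * (DS \<mu> \<nu> - 2 * (1/2 * (m * uu \<mu> * V \<nu> - m * uu \<nu> * V \<mu>))))
     = (\<Sum>\<mu>\<in>UNIV. \<Sum>\<nu>\<in>UNIV. ul \<nu> * Dul \<mu> * DS \<mu> \<nu>)
       - m * ((\<Sum>\<mu>\<in>UNIV. Dul \<mu> * uu \<mu>) * (\<Sum>\<nu>\<in>UNIV. ul \<nu> * V \<nu>))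
       + m * ((\<Sum>\<mu>\<in>UNIV. Dul \<mu> * V \<mu>) * (\<Sum>\<nu>\<in>UNIV. ul \<nu> * uu \<nu>))"
  proof -
    have "(\<Sum>\<mu>\<in>UNIV. \<Sum>\<nu>\<in>UNIV. ul \<nu> * Dul \<mu>
          * (DS \<mu> \<nu> - 2 * (1/2 * (m * uu \<mu> * V \<nu> - m * uu \<nu> * V \<mu>))))
       = (\<Sum>\<mu>\<in>UNIV. \<Sum>\<nu>\<in>UNIV. ul \<nu> * Dul \<mu> * DS \<mu> \<nu>)
       - m * (\<Sum>\<mu>\<in>UNIV. \<Sum>\<nu>\<in>UNIV. (Dul \<mu> * uu \<mu>) * (ul \<nu> * V \<nu>))
       + m * (\<Sum>\<mu>\<in>UNIV. \<Sum>\<nu>\<in>UNIV. (Dul \<mu> * V \<mu>) * (ul \<nu> * uu \<nu>))"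
      by (simp add: sum_distrib_left algebra_simps sum.distrib sum_subtractf)
    then show ?thesis by (simp add: sum_product)
  qed
  have "(\<Sum>\<mu>\<in>UNIV. (Dp \<mu> - curv \<mu>) * vl \<mu>) + (\<Sum>\<mu>\<in>UNIV. \<Sum>\<nu>\<in>UNIV. ul \<nu> * Dul \<mu>
          * (DS \<mu> \<nu> - 2 * (1/2 * (m * uu \<mu> * V \<nu> - m * uu \<nu> * V \<mu>)))) = m' * c"
    using a sec e d cc uu1 by simp
  then show ?thesis using c0 by (simp add: ul_def vl_def c_def field_simps)
qed
lemma lor_inv:
  fixes G :: "real^'n^'n"
  assumes "lorentzian_matrix G"
  shows "G ** matrix_inv G = mat 1"
proof -
  from assms obtain P :: "real^'n^'n" and i0 where P: "invertible P"
    and D: "transpose P ** G ** P = (\<chi> i j. if i = j then (if i = i0 then -1 else 1) else 0)"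
    unfolding lorentzian_matrix_def by blast
  have dD: "det ((\<chi> i j. if i = j then (if i = i0 then -1 else 1) else 0) :: real^'n^'n) \<noteq> 0"
    by (subst det_diagonal) auto
  then have "det P * det G * det P \<noteq> 0" using D by (metis det_mul det_transpose)
  then have "det G \<noteq> 0" by auto
  hence "invertible G" by (simp add: invertible_det_nz)
  then show ?thesis
    by (metis (mono_tags, lifting) invertible_def matrix_inv_def someI_ex)
qed

lemma lor_inv_comp:
  fixes G :: "real^'n^'n"
  assumes "lorentzian_matrix G"
  shows "(\<Sum>\<alpha>\<in>UNIV. G $ c $ \<alpha> * matrix_inv G $ \<alpha> $ d) = (if c = d then 1 else 0)"
proof -
  have "(G ** matrix_inv G) $ c $ d = mat 1 $ c $ d" using lor_inv[OF assms] by simp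
  then show ?thesis by (simp add: matrix_matrix_mult_def mat_def)
qed

lemma lor_sym:
  fixes G :: "real^'n^'n"
  assumes "lorentzian_matrix G"
  shows "G $ a $ b = G $ b $ a"
proof -
  have "transpose G = G" using assms by (simp add: lorentzian_matrix_def)
  then show ?thesis by (metis transpose_def vec_lambda_beta)
qed

lemma comp_deriv:
  "(f has_vector_derivative f') (at s) \<Longrightarrow> ((\<lambda>t. f t $ i) has_real_derivative f' $ i) (at s)"
  using bounded_linear.has_vector_derivative[OF bounded_linear_vec_nth]
  by (simp add: has_real_derivative_iff_has_vector_derivative)

lemma comp_deriv2:
  "(f has_vector_derivative f') (at s) \<Longrightarrow> ((\<lambda>t. f t $ i $ j) has_real_derivative f' $ i $ j) (at s)"
proof -
  assume "(f has_vector_derivative f') (at s)"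
  then have "((\<lambda>t. f t $ i) has_vector_derivative f' $ i) (at s)"
    using bounded_linear.has_vector_derivative[OF bounded_linear_vec_nth] by blast
  then show ?thesis using comp_deriv by blast
qed

lemma gder:
  fixes h :: "real^'n \<Rightarrow> real"
  assumes hd: "h differentiable (at x)" and zd: "(z has_vector_derivative V) (at s)" and zx: "z s = x"
  shows "((\<lambda>t. h (z t)) has_real_derivative (\<Sum>k\<in>UNIV. pd h x k * V $ k)) (at s)"
proof -
  let ?L = "frechet_derivative h (at x)"
  have h1: "(h has_derivative ?L) (at (z s))" using hd frechet_derivative_works zx by auto
  have z1: "(z has_derivative (\<lambda>r. r *\<^sub>R V)) (at s)" using zd by (simp add: has_vector_derivative_def)
  have c: "((h \<circ> z) has_derivative (?L \<circ> (\<lambda>r. r *\<^sub>R V))) (at s)" by (rule diff_chain_at[OF z1 h1])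
  have lin: "linear ?L" using h1 has_derivative_linear by blast
  have LV: "?L V = (\<Sum>k\<in>UNIV. pd h x k * V $ k)"
  proof -
    have "V = (\<Sum>k\<in>UNIV. V $ k *\<^sub>R axis k 1)"
      using basis_expansion[of V] by (simp add: scalar_mult_eq_scaleR)
    then have "?L V = ?L (\<Sum>k\<in>UNIV. V $ k *\<^sub>R axis k 1)" by simp
    also have "\<dots> = (\<Sum>k\<in>UNIV. V $ k * ?L (axis k 1))"
      by (simp add: linear_sum[OF lin] linear_scale[OF lin])
    finally show ?thesis by (simp add: pd_def mult_ac)
  qed
  have "(?L \<circ> (\<lambda>r. r *\<^sub>R V)) = (*) (\<Sum>k\<in>UNIV. pd h x k * V $ k)"
    by (rule ext) (simp add: linear_scale[OF lin] LV mult_ac)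
  then show ?thesis using c by (simp add: has_field_derivative_def comp_def)
qed

lemma const_deriv0:
  fixes f :: "real \<Rightarrow> real"
  assumes "(f has_real_derivative D) (at s)" "open T" "s \<in> T" "\<And>t. t \<in> T \<Longrightarrow> f t = c"
  shows "D = 0"
proof -
  have "((\<lambda>_. c) has_real_derivative D) (at s)"
    by (rule has_field_derivative_transform_within_open[OF assms(1-3)]) (simp add: assms(4))
  then show ?thesis using DERIV_const DERIV_unique by blast
qed

lemma contr2:
  fixes G H :: "'n::finite \<Rightarrow> 'n \<Rightarrow> real"
  assumes Gs: "\<And>a b. G a b = G b a"
    and inv: "\<And>c d. (\<Sum>\<alpha>\<in>UNIV. G c \<alpha> * H \<alpha> d) = (if c = d then 1 else 0)"
  shows "(\<Sum>\<mu>\<in>UNIV. (\<Sum>\<sigma>\<in>UNIV. H \<mu> \<sigma> * R \<sigma>) * (\<Sum>\<alpha>\<in>UNIV. G \<mu> \<alpha> * W \<alpha>)) = (\<Sum>\<sigma>\<in>UNIV. R \<sigma> * W \<sigma>)"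
proof -
  have "(\<Sum>\<mu>\<in>UNIV. (\<Sum>\<sigma>\<in>UNIV. H \<mu> \<sigma> * R \<sigma>) * (\<Sum>\<alpha>\<in>UNIV. G \<mu> \<alpha> * W \<alpha>))
     = (\<Sum>\<mu>\<in>UNIV. \<Sum>\<alpha>\<in>UNIV. \<Sum>\<sigma>\<in>UNIV. H \<mu> \<sigma> * R \<sigma> * (G \<mu> \<alpha> * W \<alpha>))"
    by (simp add: sum_distrib_left sum_distrib_right)
  also have "\<dots> = (\<Sum>\<sigma>\<in>UNIV. \<Sum>\<alpha>\<in>UNIV. \<Sum>\<mu>\<in>UNIV. H \<mu> \<sigma> * R \<sigma> * (G \<mu> \<alpha> * W \<alpha>))"
    by (rule trans[OF s12], rule trans[OF s23], rule trans[OF s12], rule refl)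
  also have "\<dots> = (\<Sum>\<sigma>\<in>UNIV. \<Sum>\<alpha>\<in>UNIV. R \<sigma> * W \<alpha> * (\<Sum>\<mu>\<in>UNIV. G \<alpha> \<mu> * H \<mu> \<sigma>))"
    by (rule sum.cong[OF refl], rule sum.cong[OF refl]) (simp add: sum_distrib_left Gs[of _ \<alpha> for \<alpha>] mult_ac)
  also have "\<dots> = (\<Sum>\<sigma>\<in>UNIV. \<Sum>\<alpha>\<in>UNIV. if \<alpha> = \<sigma> then R \<sigma> * W \<sigma> else 0)"
    by (rule sum.cong[OF refl], rule sum.cong[OF refl]) (simp add: inv)
  also have "\<dots> = (\<Sum>\<sigma>\<in>UNIV. R \<sigma> * W \<sigma>)" by simp
  finally show ?thesis .
qed

lemma Riem_up_anti: "Riem_up g x \<rho> \<sigma> \<mu> \<nu> = - Riem_up g x \<rho> \<sigma> \<nu> \<mu>"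
  by (simp add: Riem_up_def sum_subtractf algebra_simps)

lemma Riem_low_anti: "Riem_low g x \<kappa> l \<mu> \<nu> = - Riem_low g x \<kappa> l \<nu> \<mu>"
  by (simp add: Riem_low_def Riem_up_anti[of g x _ l \<mu> \<nu>] sum_negf)
theorem mainTheorem8:
  fixes g :: "real^'n \<Rightarrow> real^'n^'n" and U :: "(real^'n) set"
    and T :: "real set" and z v p u :: "real \<Rightarrow> real^'n"
    and S :: "real \<Rightarrow> real^'n^'n" and M :: "real \<Rightarrow> real" and s :: real
  assumes U_open: "open U"
    and g_lor: "\<And>x. x \<in> U \<Longrightarrow> lorentzian_matrix (g x)"
    and g_C1: "\<And>x i j. x \<in> U \<Longrightarrow> (\<lambda>y. g y $ i $ j) differentiable (at x)"
    and g_C2: "\<And>x i j k. x \<in> U \<Longrightarrow> (\<lambda>y. pd (\<lambda>w. g w $ i $ j) y k) differentiable (at x)"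
    and T_open: "open T"
    and z_in: "\<And>t. t \<in> T \<Longrightarrow> z t \<in> U"
    and z_deriv: "\<And>t. t \<in> T \<Longrightarrow> (z has_vector_derivative v t) (at t)"
    and v_cont: "continuous_on T v"
    and p_diff: "\<And>t. t \<in> T \<Longrightarrow> p differentiable (at t)"
    and S_diff: "\<And>t. t \<in> T \<Longrightarrow> S differentiable (at t)"
    and u_diff: "\<And>t. t \<in> T \<Longrightarrow> u differentiable (at t)"
    and M_diff: "\<And>t. t \<in> T \<Longrightarrow> M differentiable (at t)"
    and S_antisym: "\<And>t \<mu> \<nu>. t \<in> T \<Longrightarrow> S t $ \<mu> $ \<nu> = - S t $ \<nu> $ \<mu>"
    and u_unit: "\<And>t. t \<in> T \<Longrightarrow> (\<Sum>\<mu>\<in>UNIV. lower g (z t) (u t) \<mu> * u t $ \<mu>) = -1"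
    and M_pos: "\<And>t. t \<in> T \<Longrightarrow> M t > 0"
    and p_Mu: "\<And>t. t \<in> T \<Longrightarrow> p t = M t *\<^sub>R u t"
    and uS: "\<And>t \<nu>. t \<in> T \<Longrightarrow> (\<Sum>\<mu>\<in>UNIV. lower g (z t) (u t) \<mu> * S t $ \<mu> $ \<nu>) = 0"
    and uv: "\<And>t. t \<in> T \<Longrightarrow> (\<Sum>\<kappa>\<in>UNIV. u t $ \<kappa> * lower g (z t) (v t) \<kappa>) \<noteq> 0"
    and s_in: "s \<in> T"
  shows "deriv M s =
    inverse (\<Sum>\<kappa>\<in>UNIV. u s $ \<kappa> * lower g (z s) (v s) \<kappa>) *
      ((\<Sum>\<mu>\<in>UNIV. force g z v p S s \<mu> * lower g (z s) (v s) \<mu>)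
       + (\<Sum>\<mu>\<in>UNIV. \<Sum>\<nu>\<in>UNIV. lower g (z s) (u s) \<nu>
            * cov_covec g z v (\<lambda>t. lower g (z t) (u t)) s \<mu>
            * torque g z v p S s \<mu> \<nu>))"
proof -
  obtain x where x: "z s = x" by blast
  have xU: "x \<in> U" using z_in[OF s_in] x by simp
  have lorx: "lorentzian_matrix (g x)" by (rule g_lor[OF xU])
  have Gs: "\<And>a b. g x $ a $ b = g x $ b $ a" by (rule lor_sym[OF lorx])
  define Gi where "Gi = ginv g x"
  have inv: "\<And>c d. (\<Sum>\<alpha>\<in>UNIV. g x $ c $ \<alpha> * Gi $ \<alpha> $ d) = (if c = d then 1 else 0)"
    unfolding Gi_def ginv_def by (rule lor_inv_comp[OF lorx])
  define pdg where "pdg i j k = pd (\<lambda>y. g y $ i $ j) x k" for i j k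
  have pdsym: "\<And>i j k. pdg i j k = pdg j i k"
  proof -
    fix i j k
    have "frechet_derivative (\<lambda>y. g y $ i $ j) (at x) = frechet_derivative (\<lambda>y. g y $ j $ i) (at x)"
      by (rule frechet_derivative_transform_within_open[OF g_C1[OF xU] U_open xU])
         (rule lor_sym[OF g_lor])
    then show "pdg i j k = pdg j i k" by (simp add: pdg_def pd_def)
  qed
  define \<Gamma> where "\<Gamma> a b c = Gamma g x a b c" for a b c
  have GamL: "\<And>\<gamma> \<beta> \<mu>. (\<Sum>\<alpha>\<in>UNIV. g x $ \<alpha> $ \<gamma> * \<Gamma> \<alpha> \<beta> \<mu>)
       = 1/2 * (pdg \<gamma> \<mu> \<beta> + pdg \<gamma> \<beta> \<mu> - pdg \<beta> \<mu> \<gamma>)"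
  proof -
    fix \<gamma> \<beta> \<mu>
    have "(\<Sum>\<alpha>\<in>UNIV. g x $ \<alpha> $ \<gamma> * \<Gamma> \<alpha> \<beta> \<mu>)
       = (\<Sum>\<alpha>\<in>UNIV. 1/2 * (g x $ \<gamma> $ \<alpha> * (\<Sum>d\<in>UNIV. Gi $ \<alpha> $ d * (pdg d \<mu> \<beta> + pdg d \<beta> \<mu> - pdg \<beta> \<mu> d))))"
      by (rule sum.cong[OF refl]) (simp add: \<Gamma>_def Gamma_def Gi_def pdg_def Gs[of _ \<gamma>])
    also have "\<dots> = 1/2 * (\<Sum>\<alpha>\<in>UNIV. g x $ \<gamma> $ \<alpha> * (\<Sum>d\<in>UNIV. Gi $ \<alpha> $ d * (pdg d \<mu> \<beta> + pdg d \<beta> \<mu> - pdg \<beta> \<mu> d)))"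
      by (rule sum_distrib_left[symmetric])
    also have "\<dots> = 1/2 * (pdg \<gamma> \<mu> \<beta> + pdg \<gamma> \<beta> \<mu> - pdg \<beta> \<mu> \<gamma>)"
      using contr[of "\<lambda>a b. g x $ a $ b" "\<lambda>a b. Gi $ a $ b"] inv by simp
    finally show "?thesis \<gamma> \<beta> \<mu>" .
  qed
  have E0: "\<And>\<mu> \<gamma> \<beta>. pdg \<mu> \<gamma> \<beta> = (\<Sum>\<alpha>\<in>UNIV. g x $ \<alpha> $ \<gamma> * \<Gamma> \<alpha> \<beta> \<mu> + g x $ \<mu> $ \<alpha> * \<Gamma> \<alpha> \<beta> \<gamma>)"
  proof -
    fix \<mu> \<gamma> \<beta>
    have "(\<Sum>\<alpha>\<in>UNIV. g x $ \<mu> $ \<alpha> * \<Gamma> \<alpha> \<beta> \<gamma>) = (\<Sum>\<alpha>\<in>UNIV. g x $ \<alpha> $ \<mu> * \<Gamma> \<alpha> \<beta> \<gamma>)"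
      by (rule sum.cong[OF refl]) (simp add: Gs[of \<mu>])
    then show "?thesis \<mu> \<gamma> \<beta>"
      using GamL[of \<gamma> \<beta> \<mu>] GamL[of \<mu> \<beta> \<gamma>] pdsym[of \<gamma> \<mu> \<beta>] pdsym[of \<gamma> \<beta> \<mu>] pdsym[of \<mu> \<beta> \<gamma>]
      by (simp add: sum.distrib)
  qed
  define V where "V = v s"
  define dg where "dg i j = (\<Sum>k\<in>UNIV. pdg i j k * V $ k)" for i j
  have E: "\<And>\<mu> \<gamma>. dg \<mu> \<gamma> = (\<Sum>\<beta>\<in>UNIV. V $ \<beta> * (\<Sum>\<alpha>\<in>UNIV. g x $ \<alpha> $ \<gamma> * \<Gamma> \<alpha> \<beta> \<mu> + g x $ \<mu> $ \<alpha> * \<Gamma> \<alpha> \<beta> \<gamma>))"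
    by (simp add: dg_def E0 mult_ac)
  have zd: "(z has_vector_derivative V) (at s)" using z_deriv[OF s_in] by (simp add: V_def)
  have Dg: "\<And>i j. ((\<lambda>t. g (z t) $ i $ j) has_real_derivative dg i j) (at s)"
    unfolding dg_def pdg_def by (rule gder[OF g_C1[OF xU] zd x])
  define u' where "u' = vector_derivative u (at s)"
  have ud: "(u has_vector_derivative u') (at s)"
    using u_diff[OF s_in] vector_derivative_works u'_def by blast
  have Du_c: "\<And>i. ((\<lambda>t. u t $ i) has_real_derivative u' $ i) (at s)" by (rule comp_deriv[OF ud])
  define S' where "S' = vector_derivative S (at s)"
  have Sd: "(S has_vector_derivative S') (at s)"
    using S_diff[OF s_in] vector_derivative_works S'_def by blast
  have DS_c: "\<And>i j. ((\<lambda>t. S t $ i $ j) has_real_derivative S' $ i $ j) (at s)" by (rule comp_deriv2[OF Sd])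
  define m' where "m' = deriv M s"
  have Md: "(M has_real_derivative m') (at s)"
    using M_diff[OF s_in] DERIV_deriv_iff_real_differentiable m'_def by blast
  have pder: "vector_derivative p (at s) = m' *\<^sub>R u s + M s *\<^sub>R u'"
  proof -
    have "((\<lambda>t. M t *\<^sub>R u t) has_vector_derivative (M s *\<^sub>R u' + m' *\<^sub>R u s)) (at s)"
      by (rule has_vector_derivative_scaleR[OF Md ud])
    then have "(p has_vector_derivative (M s *\<^sub>R u' + m' *\<^sub>R u s)) (at s)"
      by (rule has_vector_derivative_transform_within_open[OF _ T_open s_in]) (simp add: p_Mu)
    then show ?thesis by (simp add: vector_derivative_at)
  qed
  have Dlow: "\<And>\<mu>. ((\<lambda>t. lower g (z t) (u t) \<mu>) has_real_derivative
       (\<Sum>\<alpha>\<in>UNIV. dg \<mu> \<alpha> * u s $ \<alpha> + u' $ \<alpha> * g x $ \<mu> $ \<alpha>)) (at s)"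
    unfolding lower_def
    by (rule DERIV_sum) (use DERIV_mult[OF Dg Du_c] x in simp)
  have B: "(\<Sum>\<mu>\<in>UNIV. (\<Sum>\<alpha>\<in>UNIV. dg \<mu> \<alpha> * u s $ \<alpha> + u' $ \<alpha> * g x $ \<mu> $ \<alpha>) * u s $ \<mu>
             + u' $ \<mu> * lower g x (u s) \<mu>) = 0"
  proof (rule const_deriv0[OF _ T_open s_in])
    show "((\<lambda>t. \<Sum>\<mu>\<in>UNIV. lower g (z t) (u t) \<mu> * u t $ \<mu>) has_real_derivative
      (\<Sum>\<mu>\<in>UNIV. (\<Sum>\<alpha>\<in>UNIV. dg \<mu> \<alpha> * u s $ \<alpha> + u' $ \<alpha> * g x $ \<mu> $ \<alpha>) * u s $ \<mu>
             + u' $ \<mu> * lower g x (u s) \<mu>)) (at s)"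
      by (rule DERIV_sum) (use DERIV_mult[OF Dlow Du_c] x in simp)
    show "\<And>t. t \<in> T \<Longrightarrow> (\<Sum>\<mu>\<in>UNIV. lower g (z t) (u t) \<mu> * u t $ \<mu>) = -1" by (rule u_unit)
  qed
  have C: "\<And>\<nu>. (\<Sum>\<mu>\<in>UNIV. (\<Sum>\<alpha>\<in>UNIV. dg \<mu> \<alpha> * u s $ \<alpha> + u' $ \<alpha> * g x $ \<mu> $ \<alpha>) * S s $ \<mu> $ \<nu>
             + S' $ \<mu> $ \<nu> * lower g x (u s) \<mu>) = 0"
  proof (rule const_deriv0[OF _ T_open s_in])
    fix \<nu>
    show "((\<lambda>t. \<Sum>\<mu>\<in>UNIV. lower g (z t) (u t) \<mu> * S t $ \<mu> $ \<nu>) has_real_derivative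
      (\<Sum>\<mu>\<in>UNIV. (\<Sum>\<alpha>\<in>UNIV. dg \<mu> \<alpha> * u s $ \<alpha> + u' $ \<alpha> * g x $ \<mu> $ \<alpha>) * S s $ \<mu> $ \<nu>
             + S' $ \<mu> $ \<nu> * lower g x (u s) \<mu>)) (at s)"
      by (rule DERIV_sum) (use DERIV_mult[OF Dlow DS_c] x in simp)
    show "\<And>t. t \<in> T \<Longrightarrow> (\<Sum>\<mu>\<in>UNIV. lower g (z t) (u t) \<mu> * S t $ \<mu> $ \<nu>) = 0" by (rule uS)
  qed
  have dlow: "\<And>\<mu>. deriv (\<lambda>t. lower g (z t) (u t) \<mu>) s = (\<Sum>\<alpha>\<in>UNIV. dg \<mu> \<alpha> * u s $ \<alpha> + u' $ \<alpha> * g x $ \<mu> $ \<alpha>)"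
    by (rule DERIV_imp_deriv[OF Dlow])
  define Gm where "Gm a b = g x $ a $ b" for a b
  define uu where "uu a = u s $ a" for a
  define Vf where "Vf a = V $ a" for a
  define Bil where "Bil X Y = (\<Sum>\<mu>\<in>UNIV. (\<Sum>\<alpha>\<in>UNIV. Gm \<mu> \<alpha> * X \<alpha>) * Y \<mu>)" for X Y :: "'n \<Rightarrow> real"
  have GsM: "\<And>a b. Gm a b = Gm b a" by (simp add: Gm_def Gs)
  have Bil_addL: "\<And>X Y Z. Bil (\<lambda>a. X a + Y a) Z = Bil X Z + Bil Y Z"
    by (simp add: Bil_def algebra_simps sum.distrib)
  have Bil_addR: "\<And>X Y Z. Bil Z (\<lambda>a. X a + Y a) = Bil Z X + Bil Z Y"
    by (simp add: Bil_def algebra_simps sum.distrib)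
  have EM: "\<And>\<mu> \<gamma>. dg \<mu> \<gamma> = (\<Sum>\<beta>\<in>UNIV. Vf \<beta> * (\<Sum>\<alpha>\<in>UNIV. Gm \<alpha> \<gamma> * \<Gamma> \<alpha> \<beta> \<mu> + Gm \<mu> \<alpha> * \<Gamma> \<alpha> \<beta> \<gamma>))"
    by (simp add: E Gm_def Vf_def)
  note core_i = core[where dg=dg and V=Vf and G=Gm and \<Gamma>=\<Gamma>, OF EM]
  note core1_i = core1[where dg=dg and V=Vf and G=Gm and \<Gamma>=\<Gamma>, OF EM]
  define \<Gamma>u where "\<Gamma>u \<alpha> = (\<Sum>a\<in>UNIV. \<Sum>b\<in>UNIV. \<Gamma> \<alpha> a b * Vf a * uu b)" for \<alpha>
  define Du where "Du \<alpha> = cov_vec g z v u s \<alpha>" for \<alpha>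
  have Du_eq: "\<And>\<alpha>. Du \<alpha> = u' $ \<alpha> + \<Gamma>u \<alpha>"
    by (simp add: Du_def cov_vec_def u'_def x \<Gamma>_def V_def \<Gamma>u_def Vf_def uu_def)
  define u'f where "u'f a = u' $ a" for a
  have lowu: "\<And>\<mu>. lower g x (u s) \<mu> = (\<Sum>\<alpha>\<in>UNIV. Gm \<mu> \<alpha> * uu \<alpha>)"
    by (simp add: lower_def Gm_def uu_def)
  have K2: "Bil uu Du = 0"
  proof -
    have 1: "0 = (\<Sum>\<mu>\<in>UNIV. \<Sum>\<alpha>\<in>UNIV. dg \<mu> \<alpha> * uu \<alpha> * uu \<mu>) + Bil u'f uu + Bil uu u'f"
      using B by (simp add: lowu Bil_def u'f_def sum.distrib sum_distrib_right sum_distrib_left algebra_simps Gm_def uu_def)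
    have 2: "(\<Sum>\<mu>\<in>UNIV. \<Sum>\<alpha>\<in>UNIV. dg \<mu> \<alpha> * uu \<alpha> * uu \<mu>) = Bil \<Gamma>u uu + Bil uu \<Gamma>u"
      unfolding core_i \<Gamma>u_def[symmetric] by (simp add: Bil_def sum.distrib sum_distrib_right sum_distrib_left distrib_left mult_ac)
    have 3: "Du = (\<lambda>a. u'f a + \<Gamma>u a)" by (rule ext) (simp add: Du_eq u'f_def)
    have 4: "Bil Du uu = Bil uu Du" unfolding Bil_def by (rule bil_sym[OF GsM])
    have "Bil Du uu + Bil uu Du = 0" using 1 2 unfolding 3 Bil_addL Bil_addR by simp
    then show ?thesis using 4 by simp
  qed
  define Dul where "Dul \<mu> = cov_covec g z v (\<lambda>t. lower g (z t) (u t)) s \<mu>" for \<mu>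
  have K1: "\<And>\<mu>. Dul \<mu> = (\<Sum>\<alpha>\<in>UNIV. Gm \<mu> \<alpha> * Du \<alpha>)"
  proof -
    fix \<mu>
    have a: "Dul \<mu> = (\<Sum>\<alpha>\<in>UNIV. dg \<mu> \<alpha> * uu \<alpha>) + (\<Sum>\<alpha>\<in>UNIV. Gm \<mu> \<alpha> * u'f \<alpha>)
       - (\<Sum>\<alpha>\<in>UNIV. \<Sum>\<beta>\<in>UNIV. \<Gamma> \<alpha> \<beta> \<mu> * Vf \<beta> * (\<Sum>\<gamma>\<in>UNIV. Gm \<alpha> \<gamma> * uu \<gamma>))"
      unfolding Dul_def cov_covec_def dlow by (simp add: x lower_def sum.distrib \<Gamma>_def Vf_def V_def
          Gm_def uu_def u'f_def mult_ac)
    have b: "(\<Sum>\<alpha>\<in>UNIV. \<Sum>\<beta>\<in>UNIV. \<Gamma> \<alpha> \<beta> \<mu> * Vf \<beta> * (\<Sum>\<gamma>\<in>UNIV. Gm \<alpha> \<gamma> * uu \<gamma>))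
       = (\<Sum>\<beta>\<in>UNIV. \<Sum>\<alpha>\<in>UNIV. \<Gamma> \<alpha> \<beta> \<mu> * Vf \<beta> * (\<Sum>\<gamma>\<in>UNIV. Gm \<alpha> \<gamma> * uu \<gamma>))"
      by (rule sum.swap)
    have c: "(\<Sum>\<alpha>\<in>UNIV. dg \<mu> \<alpha> * uu \<alpha>) = (\<Sum>\<beta>\<in>UNIV. \<Sum>\<gamma>\<in>UNIV. \<Gamma> \<gamma> \<beta> \<mu> * Vf \<beta> * (\<Sum>\<alpha>\<in>UNIV. Gm \<gamma> \<alpha> * uu \<alpha>))
        + (\<Sum>\<alpha>\<in>UNIV. Gm \<mu> \<alpha> * \<Gamma>u \<alpha>)"
      unfolding core1_i \<Gamma>u_def ..
    show "Dul \<mu> = (\<Sum>\<alpha>\<in>UNIV. Gm \<mu> \<alpha> * Du \<alpha>)"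
      unfolding a b c by (simp add: Du_eq u'f_def distrib_left sum.distrib)
  qed
  define Sm where "Sm a b = S s $ a $ b" for a b
  define S'm where "S'm a b = S' $ a $ b" for a b
  define Tt where "Tt i j = (\<Sum>a\<in>UNIV. \<Sum>b\<in>UNIV. \<Gamma> i a b * Vf a * Sm b j)" for i j
  define DSf where "DSf i j = cov_ten2 g z v S s i j" for i j
  have DS_form: "\<And>i j. DSf i j = S'm i j + Tt i j - Tt j i"
  proof -
    fix i j
    have "(\<Sum>a\<in>UNIV. \<Sum>b\<in>UNIV. \<Gamma> j a b * Vf a * Sm i b) = - Tt j i"
      by (simp add: Tt_def Sm_def S_antisym[OF s_in, of i] sum_negf)
    then show "DSf i j = S'm i j + Tt i j - Tt j i"
      by (simp add: DSf_def cov_ten2_def x \<Gamma>_def Vf_def V_def Sm_def S'm_def S'_def Tt_def sum.distrib)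
  qed
  have S'anti: "\<And>i j. S'm i j = - S'm j i"
  proof -
    fix i j
    have "((\<lambda>t. - S t $ j $ i) has_real_derivative - S' $ j $ i) (at s)" by (rule DERIV_minus[OF DS_c])
    then have "((\<lambda>t. S t $ i $ j) has_real_derivative - S' $ j $ i) (at s)"
      by (rule has_field_derivative_transform_within_open[OF _ T_open s_in]) (simp add: S_antisym[of _ i j])
    then show "S'm i j = - S'm j i" using DS_c[of i j] DERIV_unique S'm_def by force
  qed
  have DSa: "\<And>a b. DSf a b = - DSf b a"
  proof -
    fix a b
    show "DSf a b = - DSf b a" using S'anti[of a b] by (simp add: DS_form)
  qed
  have Sa: "\<And>a b. Sm a b = - Sm b a" unfolding Sm_def by (rule S_antisym[OF s_in])
  have K3: "\<And>\<nu>. (\<Sum>\<mu>\<in>UNIV. Dul \<mu> * Sm \<mu> \<nu>) + (\<Sum>\<mu>\<in>UNIV. (\<Sum>\<alpha>\<in>UNIV. Gm \<mu> \<alpha> * uu \<alpha>) * DSf \<mu> \<nu>) = 0"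
  proof -
    fix \<nu>
    define Y where "Y \<mu> = Sm \<mu> \<nu>" for \<mu>
    define Y' where "Y' \<mu> = S'm \<mu> \<nu>" for \<mu>
    define \<Gamma>S where "\<Gamma>S \<mu> = Tt \<mu> \<nu>" for \<mu>
    define R where "R \<mu> = Tt \<nu> \<mu>" for \<mu>
    have 1: "0 = (\<Sum>\<mu>\<in>UNIV. \<Sum>\<alpha>\<in>UNIV. dg \<mu> \<alpha> * uu \<alpha> * Y \<mu>) + Bil u'f Y + Bil uu Y'"
      using C[of \<nu>] by (simp add: lowu Bil_def u'f_def Y_def Y'_def Sm_def S'm_def sum.distrib
          sum_distrib_right sum_distrib_left algebra_simps Gm_def uu_def)
    have \<Gamma>S_eq: "\<And>\<mu>. (\<Sum>a\<in>UNIV. \<Sum>b\<in>UNIV. \<Gamma> \<mu> a b * Vf a * Y b) = \<Gamma>S \<mu>"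
      by (simp add: \<Gamma>S_def Tt_def Y_def)
    have 2: "(\<Sum>\<mu>\<in>UNIV. \<Sum>\<alpha>\<in>UNIV. dg \<mu> \<alpha> * uu \<alpha> * Y \<mu>) = Bil \<Gamma>u Y + Bil uu \<Gamma>S"
      unfolding core_i \<Gamma>u_def[symmetric] \<Gamma>S_eq
      by (simp add: Bil_def sum.distrib sum_distrib_right sum_distrib_left distrib_left mult_ac)
    have 3: "(\<Sum>\<mu>\<in>UNIV. Dul \<mu> * Sm \<mu> \<nu>) = Bil u'f Y + Bil \<Gamma>u Y"
      by (simp add: K1 Bil_def Y_def Du_eq u'f_def distrib_left sum.distrib distrib_right)
    have R0: "Bil uu R = 0"
    proof -
      define ul where "ul \<mu> = (\<Sum>\<alpha>\<in>UNIV. Gm \<mu> \<alpha> * uu \<alpha>)" for \<mu>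
      have uS2: "\<And>b. (\<Sum>\<mu>\<in>UNIV. ul \<mu> * Sm b \<mu>) = 0"
      proof -
        fix b
        have "(\<Sum>\<mu>\<in>UNIV. ul \<mu> * Sm b \<mu>) = - (\<Sum>\<mu>\<in>UNIV. ul \<mu> * Sm \<mu> b)"
          by (simp add: sum_negf[symmetric], rule sum.cong[OF refl], subst Sa, simp)
        also have "(\<Sum>\<mu>\<in>UNIV. ul \<mu> * Sm \<mu> b) = 0"
          using uS[OF s_in, of b] by (simp add: x lowu ul_def Sm_def)
        finally show "(\<Sum>\<mu>\<in>UNIV. ul \<mu> * Sm b \<mu>) = 0" by simp
      qed
      have "Bil uu R = (\<Sum>\<mu>\<in>UNIV. ul \<mu> * R \<mu>)" by (simp add: Bil_def ul_def)
      also have "\<dots> = (\<Sum>\<mu>\<in>UNIV. \<Sum>a\<in>UNIV. \<Sum>b\<in>UNIV. \<Gamma> \<nu> a b * Vf a * (ul \<mu> * Sm b \<mu>))"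
        by (simp add: R_def Tt_def sum_distrib_left mult_ac)
      also have "\<dots> = (\<Sum>a\<in>UNIV. \<Sum>b\<in>UNIV. \<Sum>\<mu>\<in>UNIV. \<Gamma> \<nu> a b * Vf a * (ul \<mu> * Sm b \<mu>))"
        by (rule trans[OF s12], rule trans[OF s23], rule refl)
      also have "\<dots> = 0" by (simp add: sum_distrib_left[symmetric] uS2)
      finally show ?thesis .
    qed
    have 4: "(\<Sum>\<mu>\<in>UNIV. (\<Sum>\<alpha>\<in>UNIV. Gm \<mu> \<alpha> * uu \<alpha>) * DSf \<mu> \<nu>) = Bil uu Y' + Bil uu \<Gamma>S - Bil uu R"
      by (simp add: Bil_def DS_form Y'_def \<Gamma>S_def R_def algebra_simps sum.distrib sum_subtractf)
    show "?thesis \<nu>" using 1 2 3 4 R0 by (simp add: Y_def)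
  qed
  have K5: "\<And>a. cov_vec g z v p s a = m' * uu a + M s * Du a"
    by (simp add: cov_vec_def pder p_Mu[OF s_in] Du_eq \<Gamma>u_def x \<Gamma>_def Vf_def V_def uu_def
        sum_distrib_left algebra_simps)
  define curv where "curv \<nu> = (1/2) * (\<Sum>\<kappa>\<in>UNIV. \<Sum>l\<in>UNIV. \<Sum>\<mu>\<in>UNIV.
                  S s $ \<kappa> $ l * v s $ \<mu> * Riem_mixed g (z s) \<kappa> l \<mu> \<nu>)" for \<nu>
  define Rl where "Rl \<kappa> l a b = Riem_low g x \<kappa> l a b" for \<kappa> l a b
  define Gim where "Gim a b = Gi $ a $ b" for a b
  have invM: "\<And>c d. (\<Sum>\<alpha>\<in>UNIV. Gm c \<alpha> * Gim \<alpha> d) = (if c = d then 1 else 0)"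
    by (simp add: Gm_def Gim_def inv)
  have K6: "(\<Sum>\<mu>\<in>UNIV. curv \<mu> * (\<Sum>\<alpha>\<in>UNIV. Gm \<mu> \<alpha> * Vf \<alpha>)) = 0"
  proof -
    define vl where "vl \<mu> = (\<Sum>\<alpha>\<in>UNIV. Gm \<mu> \<alpha> * Vf \<alpha>)" for \<mu>
    define Rm where "Rm \<kappa> l a \<mu> = (\<Sum>\<sigma>\<in>UNIV. Gim \<mu> \<sigma> * Rl \<kappa> l a \<sigma>)" for \<kappa> l a \<mu>
    have cu: "\<And>\<nu>. curv \<nu> = (1/2) * (\<Sum>\<kappa>\<in>UNIV. \<Sum>l\<in>UNIV. \<Sum>\<mu>\<in>UNIV. Sm \<kappa> l * Vf \<mu> * Rm \<kappa> l \<mu> \<nu>)"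
      by (simp add: curv_def Riem_mixed_def Rm_def Rl_def Gim_def Gi_def x Sm_def Vf_def V_def)
    have inner: "\<And>\<kappa> l a. (\<Sum>\<mu>\<in>UNIV. Rm \<kappa> l a \<mu> * vl \<mu>) = (\<Sum>\<sigma>\<in>UNIV. Rl \<kappa> l a \<sigma> * Vf \<sigma>)"
      unfolding Rm_def vl_def by (rule contr2[OF GsM invM])
    have "(\<Sum>\<mu>\<in>UNIV. curv \<mu> * vl \<mu>) = (1/2) * (\<Sum>\<mu>\<in>UNIV. \<Sum>\<kappa>\<in>UNIV. \<Sum>l\<in>UNIV. \<Sum>a\<in>UNIV. Sm \<kappa> l * Vf a * (Rm \<kappa> l a \<mu> * vl \<mu>))"
      by (simp add: cu sum_distrib_left sum_distrib_right mult_ac)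
    also have "(\<Sum>\<mu>\<in>UNIV. \<Sum>\<kappa>\<in>UNIV. \<Sum>l\<in>UNIV. \<Sum>a\<in>UNIV. Sm \<kappa> l * Vf a * (Rm \<kappa> l a \<mu> * vl \<mu>))
        = (\<Sum>\<kappa>\<in>UNIV. \<Sum>l\<in>UNIV. \<Sum>a\<in>UNIV. \<Sum>\<mu>\<in>UNIV. Sm \<kappa> l * Vf a * (Rm \<kappa> l a \<mu> * vl \<mu>))"
      by (rule trans[OF sw12], rule trans[OF sw23], rule trans[OF sw34], rule refl)
    also have "\<dots> = (\<Sum>\<kappa>\<in>UNIV. \<Sum>l\<in>UNIV. Sm \<kappa> l * (\<Sum>a\<in>UNIV. Vf a * (\<Sum>\<sigma>\<in>UNIV. Vf \<sigma> * Rl \<kappa> l a \<sigma>)))"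
    proof (rule sum.cong[OF refl], rule sum.cong[OF refl])
      fix \<kappa> l
      have "(\<Sum>a\<in>UNIV. \<Sum>\<mu>\<in>UNIV. Sm \<kappa> l * Vf a * (Rm \<kappa> l a \<mu> * vl \<mu>))
          = Sm \<kappa> l * (\<Sum>a\<in>UNIV. Vf a * (\<Sum>\<mu>\<in>UNIV. Rm \<kappa> l a \<mu> * vl \<mu>))"
        by (simp add: sum_distrib_left mult_ac)
      also have "\<dots> = Sm \<kappa> l * (\<Sum>a\<in>UNIV. Vf a * (\<Sum>\<sigma>\<in>UNIV. Vf \<sigma> * Rl \<kappa> l a \<sigma>))"
        unfolding inner by (simp add: mult_ac)
      finally show "(\<Sum>a\<in>UNIV. \<Sum>\<mu>\<in>UNIV. Sm \<kappa> l * Vf a * (Rm \<kappa> l a \<mu> * vl \<mu>))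
          = Sm \<kappa> l * (\<Sum>a\<in>UNIV. Vf a * (\<Sum>\<sigma>\<in>UNIV. Vf \<sigma> * Rl \<kappa> l a \<sigma>))" .
    qed
    also have "\<dots> = 0"
    proof -
      have "\<And>\<kappa> l. (\<Sum>a\<in>UNIV. Vf a * (\<Sum>\<sigma>\<in>UNIV. Vf \<sigma> * Rl \<kappa> l a \<sigma>)) = 0"
        by (rule quad_anti) (unfold Rl_def, rule Riem_low_anti)
      then show ?thesis by simp
    qed
    finally show ?thesis by (simp add: vl_def)
  qed
  have unitM: "(\<Sum>\<mu>\<in>UNIV. (\<Sum>\<alpha>\<in>UNIV. Gm \<mu> \<alpha> * uu \<alpha>) * uu \<mu>) = -1"
    using u_unit[OF s_in] by (simp add: x lowu uu_def)
  have K2M: "(\<Sum>\<mu>\<in>UNIV. (\<Sum>\<alpha>\<in>UNIV. Gm \<mu> \<alpha> * uu \<alpha>) * Du \<mu>) = 0"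
    using K2 by (simp add: Bil_def)
  have uvM: "(\<Sum>\<kappa>\<in>UNIV. uu \<kappa> * (\<Sum>\<alpha>\<in>UNIV. Gm \<kappa> \<alpha> * Vf \<alpha>)) \<noteq> 0"
    using uv[OF s_in] by (simp add: x lower_def uu_def Gm_def Vf_def V_def)
  have main: "m' = inverse (\<Sum>\<kappa>\<in>UNIV. uu \<kappa> * (\<Sum>\<alpha>\<in>UNIV. Gm \<kappa> \<alpha> * Vf \<alpha>)) *
      ((\<Sum>\<mu>\<in>UNIV. (cov_vec g z v p s \<mu> - curv \<mu>) * (\<Sum>\<alpha>\<in>UNIV. Gm \<mu> \<alpha> * Vf \<alpha>))
     + (\<Sum>\<mu>\<in>UNIV. \<Sum>\<nu>\<in>UNIV. (\<Sum>\<alpha>\<in>UNIV. Gm \<nu> \<alpha> * uu \<alpha>) * Dul \<mu>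
          * (DSf \<mu> \<nu> - 2 * (1/2 * (M s * uu \<mu> * Vf \<nu> - M s * uu \<nu> * Vf \<mu>)))))"
    by (rule final_alg[OF GsM unitM K1 K2M K3 Sa DSa K5 K6 uvM])
  have fe: "\<And>\<mu>. force g z v p S s \<mu> = cov_vec g z v p s \<mu> - curv \<mu>"
    by (simp add: force_def curv_def)
  have te: "\<And>\<mu> \<nu>. torque g z v p S s \<mu> \<nu> = DSf \<mu> \<nu> - 2 * (1/2 * (M s * uu \<mu> * Vf \<nu> - M s * uu \<nu> * Vf \<mu>))"
    by (simp add: torque_def DSf_def p_Mu[OF s_in] uu_def Vf_def V_def)
  have lv: "\<And>\<mu>. lower g (z s) (v s) \<mu> = (\<Sum>\<alpha>\<in>UNIV. Gm \<mu> \<alpha> * Vf \<alpha>)"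
    by (simp add: lower_def x Gm_def Vf_def V_def)
  have lu: "\<And>\<mu>. lower g (z s) (u s) \<mu> = (\<Sum>\<alpha>\<in>UNIV. Gm \<mu> \<alpha> * uu \<alpha>)"
    by (simp add: x lowu)
  show ?thesis
    unfolding fe te lv lu Dul_def[symmetric] m'_def[symmetric] using main by (simp add: uu_def)
qed

end
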